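(* Let $d$ be an integer and let $u$ be a real or complex measurable function on $(0,1)$ with $\int_0^1\rho|u(\rho)|^2\mathrm{d}\rho<\infty$. Then for $d\le0$, $$\int_0^1\left|\int_0^r\rho^{1-d}u(\rho)\,\mathrm{d}\rho\right|^2r^{2d-1}\,\mathrm{d}r\le\frac{1}{j_{-d}^2}\int_0^1\rho|u(\rho)|^2\,\mathrm{d}\rho,$$ and for $d\ge1$, $$\int_0^1\left|\int_r^1\rho^{1-d}u(\rho)\,\mathrm{d}\rho\right|^2r^{2d-1}\,\mathrm{d}r\le\frac{1}{j_{d-1}^2}\int_0^1\rho|u(\rho)|^2\,\mathrm{d}\rho,$$ where $j_k$ denotes the smallest positive zero of the Bessel function $J_k$.
   Context: The Bessel function of order $k$ is $J_k(x)=\sum_{n\ge0}\frac{(-1)^n}{\Gamma(n+k+1)n!}(x/2)^{2n+k}$. *)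

theory Defs
  imports "HOL-Analysis.Analysis"
begin

definition bessel_J :: "nat \<Rightarrow> real \<Rightarrow> real" where
  "bessel_J k x = (\<Sum>n. (-1) ^ n / (Gamma (real (n + k) + 1) * fact n) * (x / 2) ^ (2 * n + k))"

definition bessel_zero :: "nat \<Rightarrow> real" where
  "bessel_zero k = (LEAST x. x > 0 \<and> bessel_J k x = 0)"

end

theory Submission
  imports Defs
begin

definition cb :: "nat \<Rightarrow> nat \<Rightarrow> real" where
  "cb k n = (-1) ^ n / (fact (n + k) * fact n)"

definition Fb :: "nat \<Rightarrow> real \<Rightarrow> real" where
  "Fb k y = (\<Sum>n. cb k n * y ^ n)"

lemma cb_summable: "summable (\<lambda>n. cb k n * y ^ n)"
proof (rule summable_comparison_test[OF _ summable_exp[of "\<bar>y\<bar>"]])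
  show "\<exists>N. \<forall>n\<ge>N. norm (cb k n * y ^ n) \<le> inverse (fact n) * \<bar>y\<bar> ^ n"
  proof (intro exI allI impI)
    fix n :: nat
    have f1: "fact n \<le> (fact (n + k) * fact n :: real)"
      using fact_ge_1[of "n+k", where 'a=real] by (simp add: mult_le_cancel_right1)
    have "norm (cb k n * y ^ n) = \<bar>y\<bar> ^ n / (fact (n + k) * fact n)"
      by (simp add: cb_def abs_mult power_abs)
    also have "\<dots> \<le> \<bar>y\<bar> ^ n / fact n"
      by (rule divide_left_mono[OF f1]) auto
    finally show "norm (cb k n * y ^ n) \<le> inverse (fact n) * \<bar>y\<bar> ^ n"
      by (simp add: field_simps)
  qed
qed

lemma diffs_cb: "diffs (cb k) = (\<lambda>n. - cb (Suc k) n)"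
proof
  fix n
  have e1: "fact (Suc n + k) = real (Suc (n + k)) * (fact (n + k) :: real)" by (simp add: fact_Suc)
  have e2: "fact (n + Suc k) = real (Suc (n + k)) * (fact (n + k) :: real)" by (simp add: fact_Suc)
  have e3: "fact (Suc n) = real (Suc n) * (fact n :: real)" by (simp add: fact_Suc)
  have p: "fact (n + k) > (0::real)" "fact n > (0::real)" by auto
  show "diffs (cb k) n = - cb (Suc k) n"
    unfolding diffs_def cb_def e1 e2 e3
    using p by (simp add: field_simps del: of_nat_Suc fact_Suc)
qed

lemma Fb_deriv: "(Fb k has_real_derivative - Fb (Suc k) y) (at y)"
proof -
  have "(Fb k has_real_derivative (\<Sum>n. diffs (cb k) n * y ^ n)) (at y)"
    unfolding Fb_def[abs_def]
    by (rule termdiffs_strong_converges_everywhere) (rule cb_summable)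
  moreover have "(\<Sum>n. diffs (cb k) n * y ^ n) = - Fb (Suc k) y"
    unfolding diffs_cb Fb_def using cb_summable
    by (simp add: suminf_minus[symmetric])
  ultimately show ?thesis by simp
qed

lemma Fb_0: "Fb k 0 = 1 / fact k"
  unfolding Fb_def using powser_zero[of "cb k"] by (simp add: cb_def)

lemma aux: "P > 0 \<Longrightarrow> Q > 0 \<Longrightarrow> R > 0 \<Longrightarrow> A > 0 \<Longrightarrow> B > 0 \<Longrightarrow> P = K1 + R \<Longrightarrow>
  K1 * (- s / (P*Q*A*(R*B))) - s/(P*Q*A*B)
   = - s/(Q*A*(R*B :: real))"
proof -
  assume h: "P > 0" "Q > 0" "R > 0" "A > 0" "B > 0" and e: "P = K1 + R"
  have "A * (B * (P * (Q * (R * s)))) = A * (B * (K1 * (Q * (R * s)))) + A * (B * (Q * (R * (R * s))))"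
    unfolding e by (simp add: algebra_simps)
  thus ?thesis using h by (simp add: field_simps)
qed

lemma Fb_rec: "Fb k y = real (Suc k) * Fb (Suc k) y - y * Fb (Suc (Suc k)) y"
proof -
  define g where "g n = (if n = 0 then 0 else cb (Suc (Suc k)) (n - 1) * y ^ n)" for n
  have "(\<lambda>n. g (Suc n)) sums (y * Fb (Suc (Suc k)) y)"
    unfolding g_def Fb_def
    using summable_sums[OF cb_summable, THEN sums_mult, of y "Suc (Suc k)" y]
    by (simp add: algebra_simps)
  hence g: "g sums (y * Fb (Suc (Suc k)) y)"
    by (subst (asm) sums_Suc_iff) (simp add: g_def)
  have a: "(\<lambda>n. real (Suc k) * (cb (Suc k) n * y ^ n)) sums (real (Suc k) * Fb (Suc k) y)"
    unfolding Fb_def using summable_sums[OF cb_summable] by (rule sums_mult)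
  have "(\<lambda>n. real (Suc k) * (cb (Suc k) n * y ^ n) - g n) sums (real (Suc k) * Fb (Suc k) y - y * Fb (Suc (Suc k)) y)"
    by (rule sums_diff[OF a g])
  moreover have "(\<lambda>n. real (Suc k) * (cb (Suc k) n * y ^ n) - g n) = (\<lambda>n. cb k n * y ^ n)"
  proof
    fix n show "real (Suc k) * (cb (Suc k) n * y ^ n) - g n = cb k n * y ^ n"
    proof (cases n)
      case 0 thus ?thesis by (simp add: g_def cb_def fact_Suc)
    next
      case (Suc m)
      have e1: "fact (Suc m + Suc k) = (real m + real k + 2) * (real m + real k + 1) * (fact (m + k) :: real)"
        by (simp add: fact_Suc algebra_simps)
      have e2: "fact (m + Suc (Suc k)) = (real m + real k + 2) * (real m + real k + 1) * (fact (m + k) :: real)"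
        by (simp add: fact_Suc algebra_simps)
      have e3: "fact (Suc m) = (real m + 1) * (fact m :: real)" by (simp add: fact_Suc)
      have e5: "fact (Suc m + k) = (real m + real k + 1) * (fact (m + k) :: real)"
        by (simp add: fact_Suc algebra_simps)
      have p: "fact (m + k) > (0::real)" "fact m > (0::real)" by auto
      have key: "real (Suc k) * cb (Suc k) (Suc m) - cb (Suc (Suc k)) m = cb k (Suc m)"
        unfolding cb_def e1 e2 e3 e5 using p power_Suc[of "-1::real" m]
        by (simp only: mult_minus1 minus_divide_left) (rule aux, auto)
      show ?thesis using Suc key unfolding g_def by (simp add: algebra_simps)
    qed
  qed
  ultimately have "(\<lambda>n. cb k n * y ^ n) sums (real (Suc k) * Fb (Suc k) y - y * Fb (Suc (Suc k)) y)" by simp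
  thus ?thesis unfolding Fb_def by (simp add: sums_iff)
qed


definition Gb :: "nat \<Rightarrow> real \<Rightarrow> real" where
  "Gb k x = Fb k (x\<^sup>2 / 4)"

lemma Gb_deriv[derivative_intros]:
  assumes "(f has_real_derivative f') (at x within s)"
  shows "((\<lambda>x. Gb k (f x)) has_real_derivative (- (f x / 2) * Gb (Suc k) (f x) * f')) (at x within s)"
proof -
  have "((\<lambda>x. Fb k ((f x)\<^sup>2 / 4)) has_real_derivative (- Fb (Suc k) ((f x)\<^sup>2 / 4)) * (2 * f x * f' / 4)) (at x within s)"
    by (rule DERIV_chain2[OF Fb_deriv]) (auto intro!: derivative_eq_intros assms)
  thus ?thesis unfolding Gb_def by (simp add: field_simps)
qed

lemma Gb_rec: "Gb k z = real (Suc k) * Gb (Suc k) z - (z\<^sup>2 / 4) * Gb (Suc (Suc k)) z"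
  unfolding Gb_def by (rule Fb_rec)

lemma Gb_0: "Gb k 0 = 1 / fact k"
  unfolding Gb_def by (simp add: Fb_0)

lemma Gb_0_pos: "Gb k 0 > 0"
  by (simp add: Gb_0)

lemma Gb_isCont: "isCont (Gb k) x"
  using Gb_deriv[of "\<lambda>x. x" 1 x UNIV k] by (auto intro: DERIV_isCont)

lemma Gb_cont: "continuous_on A (Gb k)"
  by (simp add: Gb_isCont continuous_at_imp_continuous_on)

lemma Gb_meas_base: "Gb k \<in> borel_measurable borel"
  by (rule borel_measurable_continuous_onI) (rule Gb_cont)

lemma Gb_meas[measurable]: "f \<in> borel_measurable M \<Longrightarrow> (\<lambda>x. Gb k (f x)) \<in> borel_measurable M"
  using measurable_compose[OF _ Gb_meas_base] by blast

lemma bessel_J_Gb: "bessel_J k x = (x / 2) ^ k * Gb k x"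
proof -
  have "bessel_J k x = (\<Sum>n. (x / 2) ^ k * (cb k n * (x\<^sup>2 / 4) ^ n))"
    unfolding bessel_J_def
  proof (rule suminf_cong)
    fix n
    have g: "Gamma (real (n + k) + 1) = fact (n + k)"
      using Gamma_fact[of "n + k", where 'a=real] by (simp add: add.commute)
    have p: "(x / 2) ^ (2 * n + k) = (x / 2) ^ k * (x\<^sup>2 / 4) ^ n"
    proof -
      have "(x / 2) ^ (2 * n + k) = ((x / 2)\<^sup>2) ^ n * (x / 2) ^ k" by (simp add: power_add power_mult)
      moreover have "(x / 2)\<^sup>2 = x\<^sup>2 / 4" by (simp add: power_divide)
      ultimately show ?thesis by simp
    qed
    show "(-1) ^ n / (Gamma (real (n + k) + 1) * fact n) * (x / 2) ^ (2 * n + k) =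
        (x / 2) ^ k * (cb k n * (x\<^sup>2 / 4) ^ n)"
      unfolding g p cb_def by simp
  qed
  also have "\<dots> = (x / 2) ^ k * Gb k x"
    unfolding Gb_def Fb_def by (rule suminf_mult[OF cb_summable])
  finally show ?thesis .
qed

lemma pow_deriv_div: "((\<lambda>x. x ^ Suc n / real (Suc n)) has_real_derivative x ^ n) (at x within s)"
proof -
  have "((\<lambda>x. x ^ Suc n) has_real_derivative real (Suc n) * x ^ n) (at x within s)"
    using DERIV_pow[of "Suc n" x s] by simp
  from DERIV_cdivide[OF this, of "real (Suc n)"] show ?thesis by (simp del: of_nat_Suc)
qed

lemma S_deriv:
  "((\<lambda>r. r ^ (2*k+2) * Gb (Suc k) (j * r)) has_real_derivative 2 * r ^ (2*k+1) * Gb k (j * r)) (at r within s)"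
proof -
  have "((\<lambda>r. r ^ (2*k+2) * Gb (Suc k) (j * r)) has_real_derivative
     real (2*k+2) * r ^ (2*k+1) * Gb (Suc k) (j * r) + r ^ (2*k+2) * (- (j * r / 2) * Gb (Suc (Suc k)) (j * r) * j)) (at r within s)"
    by (rule derivative_eq_intros refl | simp)+
  moreover have "real (2*k+2) * r ^ (2*k+1) * Gb (Suc k) (j * r) + r ^ (2*k+2) * (- (j * r / 2) * Gb (Suc (Suc k)) (j * r) * j)
     = 2 * r ^ (2*k+1) * Gb k (j * r)"
  proof -
    have e: "r ^ (2*k+2) = r ^ (2*k+1) * r" by simp
    show ?thesis unfolding e Gb_rec[of k "j * r"]
      by (simp add: algebra_simps power2_eq_square)
  qed
  ultimately show ?thesis by simp
qed

lemma T_deriv: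
  fixes S g :: "real \<Rightarrow> real"
  assumes "(S has_real_derivative S') (at x)" "(g has_real_derivative g') (at x)" "g x \<noteq> 0"
  shows "((\<lambda>x. S x / (2 * g x) * (R - x)\<^sup>2) has_real_derivative
     (S' / (2 * g x) - S x * g' / (2 * (g x)\<^sup>2)) * (R - x)\<^sup>2 - S x / g x * (R - x)) (at x)"
  using assms
  apply -
  apply (rule derivative_eq_intros refl | assumption | simp)+
  apply (simp add: field_simps power2_eq_square)
  done

lemma picone_alg:
  fixes y x g0 g1 R :: real
  assumes "g0 \<noteq> 0"
  shows "y * (1 - (R - x)\<^sup>2) + (((2 * y * g0) / (2 * g0) - (y * x * g1) * (- (x / 2) * g1) / (2 * g0\<^sup>2)) * (R - x)\<^sup>2
      - (y * x * g1) / g0 * (R - x)) = y * (1 - (x / 2) * (g1 / g0) * (R - x))\<^sup>2"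
  using assms by (simp add: field_simps power2_eq_square)


lemma alg2:
  fixes p K R A1 A2 A3 :: real
  assumes "A1 = 2*K+2" "A2 = 2*K+3" "A3 = 2*K+4" "R = 2*K+4" "K \<ge> 0"
  shows "p/A1 - (R\<^sup>2*(p/A1) - 2*R*(p*R/A2) + p*R\<^sup>2/A3) = p*(-(2*K+5)/(A1*A2))"
proof -
  have n: "A1 > 0" "A2 > 0" "A3 > 0" using assms by auto
  have e: "R = A3" using assms by simp
  have "A2 * p + (p * 5 + (K * (p * 2) + A1 * (A3 * (A3 * (p * 2))))) = A1 * (A2 * (A3 * p)) + A2 * (A3 * (A3 * p))"
    using assms by (simp add: algebra_simps)
  thus ?thesis unfolding e using n by (simp add: field_simps power2_eq_square)
qed

lemma Gb_nonpos_exists: "\<exists>x. 0 \<le> x \<and> Gb k x \<le> 0"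
proof (rule ccontr)
  assume "\<not> ?thesis"
  hence pos: "\<And>x. 0 \<le> x \<Longrightarrow> Gb k x > 0" by force
  define K where "K = real k"
  define R where "R = real (2*k+4)"
  have R0: "R > 0" unfolding R_def by simp
  define poly where "poly = (\<lambda>x::real. x^(2*k+2)/real(2*k+2) - (R\<^sup>2 * (x^(2*k+2)/real(2*k+2))
      - 2*R*(x^(2*k+3)/real(2*k+3)) + x^(2*k+4)/real(2*k+4)))"
  define S where "S = (\<lambda>x::real. x^(2*k+2) * Gb (Suc k) x)"
  define Q where "Q = (\<lambda>x. poly x + S x / (2 * Gb k x) * (R - x)\<^sup>2)"
  have dpoly: "(poly has_real_derivative (x^(2*k+1) * (1 - (R-x)\<^sup>2))) (at x)" for x
  proof -
    have a: "((\<lambda>x. x^(2*k+2)/real(2*k+2)) has_real_derivative x^(2*k+1)) (at x)"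
      using pow_deriv_div[of "2*k+1" x UNIV] by simp
    have b: "((\<lambda>x. x^(2*k+3)/real(2*k+3)) has_real_derivative x^(2*k+2)) (at x)"
      using pow_deriv_div[of "2*k+2" x UNIV] by (simp add: numeral_3_eq_3)
    have c: "((\<lambda>x. x^(2*k+4)/real(2*k+4)) has_real_derivative x^(2*k+3)) (at x)"
      using pow_deriv_div[of "2*k+3" x UNIV] by (simp add: eval_nat_numeral)
    have "(poly has_real_derivative x^(2*k+1) - (R\<^sup>2 * x^(2*k+1) - 2*R*x^(2*k+2) + x^(2*k+3))) (at x)"
      unfolding poly_def by (intro DERIV_diff DERIV_add DERIV_cmult a b c)
    moreover have "x^(2*k+1) - (R\<^sup>2 * x^(2*k+1) - 2*R*x^(2*k+2) + x^(2*k+3)) = x^(2*k+1) * (1 - (R-x)\<^sup>2)"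
    proof -
      have e: "x^(2*k+2) = x^(2*k+1) * x" "x^(2*k+3) = x^(2*k+1) * x * x"
        by (simp_all add: eval_nat_numeral)
      show ?thesis unfolding e by (simp add: algebra_simps power2_eq_square)
    qed
    ultimately show ?thesis by simp
  qed
  have dQ: "(Q has_real_derivative x^(2*k+1) * (1 - (x/2) * (Gb (Suc k) x / Gb k x) * (R - x))\<^sup>2) (at x)"
    if "0 \<le> x" for x
  proof -
    have dS: "(S has_real_derivative 2 * x ^ (2*k+1) * Gb k x) (at x)"
      unfolding S_def using S_deriv[of k 1 x UNIV] by simp
    have dG: "(Gb k has_real_derivative - (x / 2) * Gb (Suc k) x) (at x)"
      using Gb_deriv[of "\<lambda>x. x" 1 x UNIV k] by simp
    have g0: "Gb k x \<noteq> 0" using pos[OF that] by simp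
    define E where "E = x^(2*k+1) * (1 - (R-x)\<^sup>2) +
       (((2 * x ^ (2*k+1) * Gb k x) / (2 * Gb k x) - S x * (- (x / 2) * Gb (Suc k) x) / (2 * (Gb k x)\<^sup>2)) * (R - x)\<^sup>2
        - S x / Gb k x * (R - x))"
    have d: "(Q has_real_derivative E) (at x)"
      unfolding Q_def E_def by (rule DERIV_add[OF dpoly T_deriv[OF dS dG g0]])
    have Sx: "S x = x^(2*k+1) * x * Gb (Suc k) x" unfolding S_def by simp
    have "E = x^(2*k+1) * (1 - (x/2) * (Gb (Suc k) x / Gb k x) * (R - x))\<^sup>2"
      unfolding E_def Sx by (rule picone_alg[OF g0])
    with d show ?thesis by simp
  qed
  have "Q 0 \<le> Q R"
  proof (rule DERIV_nonneg_imp_nondecreasing[of 0 R Q])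
    fix x :: real assume x: "0 \<le> x" "x \<le> R"
    show "\<exists>y. (Q has_real_derivative y) (at x) \<and> 0 \<le> y"
      by (rule exI, rule conjI, rule dQ[OF x(1)]) (use x in simp)
  qed (use R0 in simp)
  moreover have "Q 0 = 0" unfolding Q_def poly_def S_def by (simp add: power_0_left)
  moreover have "Q R < 0"
  proof -
    have "Q R = poly R" unfolding Q_def by simp
    also have "\<dots> = R^(2*k+2)/real(2*k+2) - (R\<^sup>2*(R^(2*k+2)/real(2*k+2)) - 2*R*(R^(2*k+2)*R/real(2*k+3))
        + R^(2*k+2)*R\<^sup>2/real(2*k+4))"
    proof -
      have e: "R^(2*k+3) = R^(2*k+2) * R" "R^(2*k+4) = R^(2*k+2) * R\<^sup>2"
        by (simp_all add: eval_nat_numeral)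
      show ?thesis unfolding poly_def e by simp
    qed
    also have "\<dots> = R^(2*k+2) * (- (2*K+5) / (real(2*k+2)*real(2*k+3)))"
      by (rule alg2) (auto simp: K_def R_def)
    also have "\<dots> < 0"
      using R0 unfolding K_def by (intro mult_pos_neg) (auto intro!: divide_neg_pos)
    finally show ?thesis .
  qed
  ultimately show False by simp
qed


lemma first_zero:
  shows "bessel_zero k > 0" "Gb k (bessel_zero k) = 0"
    "\<And>x. 0 \<le> x \<Longrightarrow> x < bessel_zero k \<Longrightarrow> Gb k x > 0"
proof -
  define Z where "Z = {x::real. 0 \<le> x \<and> Gb k x = 0}"
  obtain x0 where x0: "0 \<le> x0" "Gb k x0 \<le> 0" using Gb_nonpos_exists by blast
  have "\<exists>z. 0 \<le> z \<and> z \<le> x0 \<and> Gb k z = 0"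
    by (rule IVT2') (use x0 Gb_0_pos[of k] Gb_cont in \<open>auto intro: less_imp_le\<close>)
  hence Zne: "Z \<noteq> {}" unfolding Z_def by auto
  have Zcl: "closed Z" unfolding Z_def
    by (intro closed_Collect_conj closed_Collect_le closed_Collect_eq continuous_intros Gb_cont)
  have Zbdd: "bdd_below Z" unfolding Z_def by (auto intro: bdd_belowI[of _ 0])
  define s where "s = Inf Z"
  have sZ: "s \<in> Z" unfolding s_def by (rule closed_contains_Inf[OF Zne Zbdd Zcl])
  have s0: "s > 0"
  proof -
    have "s \<ge> 0" "Gb k s = 0" using sZ unfolding Z_def by auto
    moreover have "s \<noteq> 0" using \<open>Gb k s = 0\<close> Gb_0_pos[of k] by auto
    ultimately show ?thesis by simp
  qed
  have smin: "s \<le> y" if "y \<in> Z" for y unfolding s_def by (rule cInf_lower[OF that Zbdd])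
  have bz: "bessel_zero k = s"
    unfolding bessel_zero_def
  proof (rule Least_equality)
    show "0 < s \<and> bessel_J k s = 0" using s0 sZ unfolding Z_def by (simp add: bessel_J_Gb)
  next
    fix y assume y: "0 < y \<and> bessel_J k y = 0"
    hence "Gb k y = 0" by (auto simp add: bessel_J_Gb)
    with y show "s \<le> y" by (intro smin) (simp add: Z_def)
  qed
  show "bessel_zero k > 0" using s0 bz by simp
  show "Gb k (bessel_zero k) = 0" using sZ bz unfolding Z_def by simp
  fix x :: real assume x: "0 \<le> x" "x < bessel_zero k"
  show "Gb k x > 0"
  proof (rule ccontr)
    assume "\<not> Gb k x > 0"
    hence "\<exists>z. 0 \<le> z \<and> z \<le> x \<and> Gb k z = 0"
      by (intro IVT2') (use x Gb_0_pos[of k] Gb_cont in \<open>auto intro: less_imp_le\<close>)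
    then obtain z where "0 \<le> z" "z \<le> x" "Gb k z = 0" by blast
    hence "s \<le> z" by (intro smin) (simp add: Z_def)
    with \<open>z \<le> x\<close> x bz show False by simp
  qed
qed

lemma next_pos:
  assumes "0 \<le> x" "x \<le> bessel_zero k"
  shows "Gb (Suc k) x > 0"
proof (cases "x = 0")
  case True thus ?thesis by (simp add: Gb_0_pos)
next
  case False
  hence x0: "x > 0" using assms by simp
  define M where "M = (\<lambda>r::real. r ^ (2*k+2) * Gb (Suc k) (1 * r))"
  have dM: "(M has_real_derivative 2 * r ^ (2*k+1) * Gb k (1 * r)) (at r)" for r
    unfolding M_def by (rule S_deriv)
  have "M 0 < M x"
  proof (rule DERIV_pos_imp_increasing_open[OF x0])
    fix r :: real assume r: "0 < r" "r < x"
    have "Gb k r > 0" using r assms by (intro first_zero(3)) auto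
    thus "\<exists>y. (M has_real_derivative y) (at r) \<and> 0 < y"
      using dM[of r] r by (intro exI[of _ "2 * r ^ (2*k+1) * Gb k (1 * r)"]) simp
  next
    show "continuous_on {0..x} M"
      using dM by (intro continuous_at_imp_continuous_on ballI DERIV_isCont) blast
  qed
  hence "0 < x ^ (2*k+2) * Gb (Suc k) x" unfolding M_def by simp
  moreover have "x ^ (2*k+2) > 0" using x0 by simp
  ultimately show ?thesis using zero_less_mult_pos by blast
qed


lemma schur:
  fixes u :: "real \<Rightarrow> complex" and \<kappa> h w H :: "real \<Rightarrow> real" and I :: "real \<Rightarrow> real set" and C :: real
  assumes um[measurable]: "u \<in> borel_measurable borel"
    and [measurable]: "\<kappa> \<in> borel_measurable borel" "h \<in> borel_measurable borel"
      "w \<in> borel_measurable borel" "H \<in> borel_measurable borel"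
    and Im[measurable]: "(\<lambda>p. indicator (I (snd p)) (fst p) :: ennreal) \<in> borel_measurable (lborel \<Otimes>\<^sub>M lborel)"
    and Is[measurable]: "\<And>r. I r \<in> sets borel"
    and Isub: "\<And>r. r \<in> {0<..<1} \<Longrightarrow> I r \<subseteq> {0<..<1}"
    and kpos: "\<And>\<rho>. \<rho> \<in> {0<..<1} \<Longrightarrow> \<kappa> \<rho> > 0"
    and hpos: "\<And>\<rho>. \<rho> \<in> {0<..<1} \<Longrightarrow> h \<rho> > 0"
    and wnn: "\<And>r. r \<in> {0<..<1} \<Longrightarrow> w r \<ge> 0"
    and Hnn: "\<And>r. r \<in> {0<..<1} \<Longrightarrow> H r \<ge> 0"
    and C0: "C \<ge> 0"
    and i: "\<And>r. r \<in> {0<..<1} \<Longrightarrow> (\<integral>\<^sup>+\<rho>. indicator (I r) \<rho> * ennreal (\<kappa> \<rho> * h \<rho>) \<partial>lborel) \<le> ennreal (H r)"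
    and ii: "\<And>\<rho>. \<rho> \<in> {0<..<1} \<Longrightarrow>
      (\<integral>\<^sup>+r. indicator {0<..<1} r * indicator (I r) \<rho> * ennreal (w r * H r) \<partial>lborel) \<le> ennreal (C * \<rho> * h \<rho> / \<kappa> \<rho>)"
  shows "(\<integral>\<^sup>+r. indicator {0<..<1} r * ennreal ((cmod (set_lebesgue_integral lborel (I r)
            (\<lambda>\<rho>. complex_of_real (\<kappa> \<rho>) * u \<rho>)))\<^sup>2 * w r) \<partial>lborel)
        \<le> ennreal C * (\<integral>\<^sup>+\<rho>. indicator {0<..<1} \<rho> * ennreal (\<rho> * (cmod (u \<rho>))\<^sup>2) \<partial>lborel)"
proof -
  define Y where "Y r = (\<integral>\<^sup>+\<rho>. indicator (I r) \<rho> * ennreal (\<kappa> \<rho> * (cmod (u \<rho>))\<^sup>2 / h \<rho>) \<partial>lborel)" for r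
  have step1: "ennreal ((cmod (set_lebesgue_integral lborel (I r) (\<lambda>\<rho>. complex_of_real (\<kappa> \<rho>) * u \<rho>)))\<^sup>2 * w r)
      \<le> ennreal (w r * H r) * Y r" if r: "r \<in> {0<..<1}" for r
  proof -
    let ?S = "set_lebesgue_integral lborel (I r) (\<lambda>\<rho>. complex_of_real (\<kappa> \<rho>) * u \<rho>)"
    let ?X = "\<integral>\<^sup>+\<rho>. indicator (I r) \<rho> * ennreal (\<kappa> \<rho> * cmod (u \<rho>)) \<partial>lborel"
    have A: "ennreal (cmod ?S) \<le> ?X"
    proof (cases "integrable lborel (\<lambda>\<rho>. indicator (I r) \<rho> *\<^sub>R (complex_of_real (\<kappa> \<rho>) * u \<rho>))")
      case True
      have "ennreal (cmod ?S) \<le> (\<integral>\<^sup>+\<rho>. norm (indicator (I r) \<rho> *\<^sub>R (complex_of_real (\<kappa> \<rho>) * u \<rho>)) \<partial>lborel)"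
        unfolding set_lebesgue_integral_def by (rule integral_norm_bound_ennreal[OF True])
      also have "\<dots> = ?X"
      proof (rule nn_integral_cong)
        fix x :: real
        show "ennreal (norm (indicator (I r) x *\<^sub>R (complex_of_real (\<kappa> x) * u x))) =
          indicator (I r) x * ennreal (\<kappa> x * cmod (u x))"
        proof (cases "x \<in> I r")
          case True
          hence "\<kappa> x > 0" using Isub[OF r] kpos by blast
          thus ?thesis using True by (simp add: norm_mult)
        qed simp
      qed
      finally show ?thesis .
    next
      case False
      thus ?thesis unfolding set_lebesgue_integral_def by (simp add: not_integrable_integral_eq)
    qed
    have B: "?X\<^sup>2 \<le> (\<integral>\<^sup>+\<rho>. indicator (I r) \<rho> * ennreal (\<kappa> \<rho> * h \<rho>) \<partial>lborel) * Y r"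
    proof -
      define f where "f \<rho> = indicator (I r) \<rho> * ennreal (sqrt (\<kappa> \<rho> * h \<rho>))" for \<rho>
      define g where "g \<rho> = indicator (I r) \<rho> * ennreal (sqrt (\<kappa> \<rho> * (cmod (u \<rho>))\<^sup>2 / h \<rho>))" for \<rho>
      have [measurable]: "f \<in> borel_measurable lborel" "g \<in> borel_measurable lborel"
        unfolding f_def g_def by measurable
      have CS: "(\<integral>\<^sup>+x. f x * g x \<partial>lborel)\<^sup>2 \<le> (\<integral>\<^sup>+x. f x ^ 2 \<partial>lborel) * (\<integral>\<^sup>+x. g x ^ 2 \<partial>lborel)"
        by (rule Cauchy_Schwarz_nn_integral) measurable
      have pos: "\<kappa> x > 0 \<and> h x > 0" if "x \<in> I r" for x
        using that Isub[OF r] kpos hpos by blast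
      have e1: "(\<integral>\<^sup>+x. f x * g x \<partial>lborel) = ?X"
      proof (rule nn_integral_cong)
        fix x show "f x * g x = indicator (I r) x * ennreal (\<kappa> x * cmod (u x))"
        proof (cases "x \<in> I r")
          case True
          have "sqrt (\<kappa> x * h x) * sqrt (\<kappa> x * (cmod (u x))\<^sup>2 / h x) = sqrt ((\<kappa> x * cmod (u x))\<^sup>2)"
          proof -
            have "\<kappa> x * h x * (\<kappa> x * (cmod (u x))\<^sup>2 / h x) = (\<kappa> x * cmod (u x))\<^sup>2"
              using pos[OF True] by (simp add: power2_eq_square)
            thus ?thesis unfolding real_sqrt_mult[symmetric] by simp
          qed
          also have "\<dots> = \<kappa> x * cmod (u x)" using pos[OF True] by simp
          finally have "sqrt (\<kappa> x * h x) * sqrt (\<kappa> x * (cmod (u x))\<^sup>2 / h x) = \<kappa> x * cmod (u x)" .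
          thus ?thesis using True pos[OF True] unfolding f_def g_def
            by (simp add: ennreal_mult[symmetric])
        qed (simp add: f_def g_def)
      qed
      have e2: "(\<integral>\<^sup>+x. f x ^ 2 \<partial>lborel) = (\<integral>\<^sup>+\<rho>. indicator (I r) \<rho> * ennreal (\<kappa> \<rho> * h \<rho>) \<partial>lborel)"
      proof (rule nn_integral_cong)
        fix x show "f x ^ 2 = indicator (I r) x * ennreal (\<kappa> x * h x)"
        proof (cases "x \<in> I r")
          case True
          thus ?thesis using pos[OF True] unfolding f_def by (simp add: ennreal_power)
        qed (simp add: f_def)
      qed
      have e3: "(\<integral>\<^sup>+x. g x ^ 2 \<partial>lborel) = Y r"
        unfolding Y_def
      proof (rule nn_integral_cong)
        fix x show "g x ^ 2 = indicator (I r) x * ennreal (\<kappa> x * (cmod (u x))\<^sup>2 / h x)"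
        proof (cases "x \<in> I r")
          case True
          thus ?thesis using pos[OF True] unfolding g_def by (simp add: ennreal_power)
        qed (simp add: g_def)
      qed
      show ?thesis using CS unfolding e1 e2 e3 .
    qed
    have "ennreal ((cmod ?S)\<^sup>2 * w r) = ennreal (w r) * (ennreal (cmod ?S))\<^sup>2"
      using wnn[OF r] by (simp add: ennreal_mult ennreal_power mult.commute)
    also have "\<dots> \<le> ennreal (w r) * ?X\<^sup>2"
      by (intro mult_left_mono power_mono A) auto
    also have "\<dots> \<le> ennreal (w r) * ((\<integral>\<^sup>+\<rho>. indicator (I r) \<rho> * ennreal (\<kappa> \<rho> * h \<rho>) \<partial>lborel) * Y r)"
      by (intro mult_left_mono B) auto
    also have "\<dots> \<le> ennreal (w r) * (ennreal (H r) * Y r)"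
      by (intro mult_left_mono mult_right_mono i r) auto
    also have "\<dots> = ennreal (w r * H r) * Y r"
      using wnn[OF r] Hnn[OF r] by (simp add: ennreal_mult mult.assoc)
    finally show ?thesis .
  qed
  define F where "F r \<rho> = indicator {0<..<1} r * ennreal (w r * H r) * indicator (I r) \<rho> *
      ennreal (\<kappa> \<rho> * (cmod (u \<rho>))\<^sup>2 / h \<rho>)" for r \<rho>
  have Fm: "(\<lambda>p. F (snd p) (fst p)) \<in> borel_measurable (lborel \<Otimes>\<^sub>M lborel)"
    unfolding F_def by measurable
  have "(\<integral>\<^sup>+r. indicator {0<..<1} r * ennreal ((cmod (set_lebesgue_integral lborel (I r)
            (\<lambda>\<rho>. complex_of_real (\<kappa> \<rho>) * u \<rho>)))\<^sup>2 * w r) \<partial>lborel)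
      \<le> (\<integral>\<^sup>+r. indicator {0<..<1} r * (ennreal (w r * H r) * Y r) \<partial>lborel)"
    by (intro nn_integral_mono) (auto split: split_indicator intro: step1)
  also have "\<dots> = (\<integral>\<^sup>+r. \<integral>\<^sup>+\<rho>. F r \<rho> \<partial>lborel \<partial>lborel)"
  proof (rule nn_integral_cong)
    fix r
    show "indicator {0<..<1} r * (ennreal (w r * H r) * Y r) = (\<integral>\<^sup>+\<rho>. F r \<rho> \<partial>lborel)"
      unfolding Y_def F_def
      by (subst nn_integral_cmult[symmetric], measurable)+ (simp add: mult.assoc)
  qed
  also have "\<dots> = (\<integral>\<^sup>+\<rho>. \<integral>\<^sup>+r. F r \<rho> \<partial>lborel \<partial>lborel)"
    by (rule lborel_pair.Fubini') (use Fm in \<open>simp add: case_prod_beta'\<close>)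
  also have "\<dots> = (\<integral>\<^sup>+\<rho>. ennreal (\<kappa> \<rho> * (cmod (u \<rho>))\<^sup>2 / h \<rho>) *
      (\<integral>\<^sup>+r. indicator {0<..<1} r * indicator (I r) \<rho> * ennreal (w r * H r) \<partial>lborel) \<partial>lborel)"
  proof (rule nn_integral_cong)
    fix \<rho>
    show "(\<integral>\<^sup>+r. F r \<rho> \<partial>lborel) = ennreal (\<kappa> \<rho> * (cmod (u \<rho>))\<^sup>2 / h \<rho>) *
      (\<integral>\<^sup>+r. indicator {0<..<1} r * indicator (I r) \<rho> * ennreal (w r * H r) \<partial>lborel)"
    proof (subst nn_integral_cmult[symmetric])
      have "(\<lambda>r. indicator (I r) \<rho> :: ennreal) \<in> borel_measurable lborel"
        using measurable_Pair2[OF Im, of \<rho>] by simp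
      thus "(\<lambda>r. indicator {0<..<1} r * indicator (I r) \<rho> * ennreal (w r * H r)) \<in> borel_measurable lborel"
        by measurable
    qed (simp add: F_def ac_simps)
  qed
  also have "\<dots> \<le> (\<integral>\<^sup>+\<rho>. ennreal C * (indicator {0<..<1} \<rho> * ennreal (\<rho> * (cmod (u \<rho>))\<^sup>2)) \<partial>lborel)"
  proof (rule nn_integral_mono)
    fix \<rho> :: real
    show "ennreal (\<kappa> \<rho> * (cmod (u \<rho>))\<^sup>2 / h \<rho>) *
      (\<integral>\<^sup>+r. indicator {0<..<1} r * indicator (I r) \<rho> * ennreal (w r * H r) \<partial>lborel)
      \<le> ennreal C * (indicator {0<..<1} \<rho> * ennreal (\<rho> * (cmod (u \<rho>))\<^sup>2))"
    proof (cases "\<rho> \<in> {0<..<1}")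
      case True
      have "ennreal (\<kappa> \<rho> * (cmod (u \<rho>))\<^sup>2 / h \<rho>) *
        (\<integral>\<^sup>+r. indicator {0<..<1} r * indicator (I r) \<rho> * ennreal (w r * H r) \<partial>lborel)
        \<le> ennreal (\<kappa> \<rho> * (cmod (u \<rho>))\<^sup>2 / h \<rho>) * ennreal (C * \<rho> * h \<rho> / \<kappa> \<rho>)"
        by (intro mult_left_mono ii True) auto
      also have "\<dots> = ennreal C * ennreal (\<rho> * (cmod (u \<rho>))\<^sup>2)"
      proof -
        have p: "\<kappa> \<rho> > 0" "h \<rho> > 0" "\<rho> > 0" using True kpos hpos by auto
        have "\<kappa> \<rho> * (cmod (u \<rho>))\<^sup>2 / h \<rho> * (C * \<rho> * h \<rho> / \<kappa> \<rho>) = C * (\<rho> * (cmod (u \<rho>))\<^sup>2)"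
          using p by (simp add: field_simps)
        thus ?thesis using p C0 by (simp add: ennreal_mult[symmetric])
      qed
      finally show ?thesis using True by simp
    next
      case False
      have "(\<lambda>r. indicator {0<..<1} r * indicator (I r) \<rho> * ennreal (w r * H r)) = (\<lambda>r. 0::ennreal)"
      proof
        fix r show "indicator {0<..<1} r * indicator (I r) \<rho> * ennreal (w r * H r) = (0::ennreal)"
          using False Isub[of r] by (auto split: split_indicator dest!: subsetD)
      qed
      thus ?thesis by simp
    qed
  qed
  also have "\<dots> = ennreal C * (\<integral>\<^sup>+\<rho>. indicator {0<..<1} \<rho> * ennreal (\<rho> * (cmod (u \<rho>))\<^sup>2) \<partial>lborel)"
    by (rule nn_integral_cmult) measurable
  finally show ?thesis .
qed

lemma fst_m[measurable]: "(fst :: real \<times> real \<Rightarrow> real) \<in> borel_measurable (lborel \<Otimes>\<^sub>M lborel)"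
  using measurable_fst[of lborel lborel] by (simp add: measurable_lborel2)
lemma snd_m[measurable]: "(snd :: real \<times> real \<Rightarrow> real) \<in> borel_measurable (lborel \<Otimes>\<^sub>M lborel)"
  using measurable_snd[of lborel lborel] by (simp add: measurable_lborel2)
lemma p1[measurable]: "Measurable.pred (lborel \<Otimes>\<^sub>M lborel) (\<lambda>x::real\<times>real. fst x \<le> snd x)"
  unfolding Measurable.pred_def using borel_measurable_le[OF fst_m snd_m] by simp
lemma p2[measurable]: "Measurable.pred (lborel \<Otimes>\<^sub>M lborel) (\<lambda>x::real\<times>real. snd x \<le> fst x)"
  unfolding Measurable.pred_def using borel_measurable_le[OF snd_m fst_m] by simp
lemma p3[measurable]: "Measurable.pred (lborel \<Otimes>\<^sub>M lborel) (\<lambda>x::real\<times>real. 0 < fst x)"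
  unfolding Measurable.pred_def using borel_measurable_less[OF measurable_const fst_m] by simp
lemma p4[measurable]: "Measurable.pred (lborel \<Otimes>\<^sub>M lborel) (\<lambda>x::real\<times>real. fst x < 1)"
  unfolding Measurable.pred_def using borel_measurable_less[OF fst_m measurable_const] by simp
lemma Im1: "(\<lambda>p::real\<times>real. indicator {0<..snd p} (fst p) :: ennreal) \<in> borel_measurable (lborel \<Otimes>\<^sub>M lborel)"
proof -
  have S: "Measurable.pred (lborel \<Otimes>\<^sub>M lborel) (\<lambda>x::real\<times>real. 0 < fst x \<and> fst x \<le> snd x)"
    by (intro pred_intros_logic p1 p3)
  have e: "(\<lambda>p. indicator {0<..snd p} (fst p) :: ennreal) = indicator {p::real\<times>real. 0 < fst p \<and> fst p \<le> snd p}"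
    by (auto simp: indicator_def fun_eq_iff)
  have Ss: "{p::real\<times>real. 0 < fst p \<and> fst p \<le> snd p} \<in> sets (lborel \<Otimes>\<^sub>M lborel)"
    using S unfolding Measurable.pred_def by (simp add: space_pair_measure)
  show ?thesis by (rule borel_measurable_indicator') (use Ss in \<open>simp add: space_pair_measure\<close>)
qed
lemma Im2: "(\<lambda>p::real\<times>real. indicator {snd p..<1} (fst p) :: ennreal) \<in> borel_measurable (lborel \<Otimes>\<^sub>M lborel)"
proof -
  have S: "Measurable.pred (lborel \<Otimes>\<^sub>M lborel) (\<lambda>x::real\<times>real. snd x \<le> fst x \<and> fst x < 1)"
    by (intro pred_intros_logic p2 p4)
  have e: "(\<lambda>p. indicator {snd p..<1} (fst p) :: ennreal) = indicator {p::real\<times>real. snd p \<le> fst p \<and> fst p < 1}"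
    by (auto simp: indicator_def fun_eq_iff)
  have Ss: "{p::real\<times>real. snd p \<le> fst p \<and> fst p < 1} \<in> sets (lborel \<Otimes>\<^sub>M lborel)"
    using S unfolding Measurable.pred_def by (simp add: space_pair_measure)
  show ?thesis by (rule borel_measurable_indicator') (use Ss in \<open>simp add: space_pair_measure\<close>)
qed

lemma schur2:
  fixes u :: "real \<Rightarrow> complex" and \<kappa> h w H :: "real \<Rightarrow> real" and I :: "real \<Rightarrow> real set" and C :: real
  assumes um: "set_borel_measurable lborel {0<..<1} u"
    and "\<kappa> \<in> borel_measurable borel" "h \<in> borel_measurable borel"
      "w \<in> borel_measurable borel" "H \<in> borel_measurable borel"
    and "(\<lambda>p. indicator (I (snd p)) (fst p) :: ennreal) \<in> borel_measurable (lborel \<Otimes>\<^sub>M lborel)"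
    and Is: "\<And>r. I r \<in> sets borel"
    and Isub: "\<And>r. r \<in> {0<..<1} \<Longrightarrow> I r \<subseteq> {0<..<1}"
    and "\<And>\<rho>. \<rho> \<in> {0<..<1} \<Longrightarrow> \<kappa> \<rho> > 0"
    and "\<And>\<rho>. \<rho> \<in> {0<..<1} \<Longrightarrow> h \<rho> > 0"
    and "\<And>r. r \<in> {0<..<1} \<Longrightarrow> w r \<ge> 0"
    and "\<And>r. r \<in> {0<..<1} \<Longrightarrow> H r \<ge> 0"
    and "C \<ge> 0"
    and "\<And>r. r \<in> {0<..<1} \<Longrightarrow> (\<integral>\<^sup>+\<rho>. indicator (I r) \<rho> * ennreal (\<kappa> \<rho> * h \<rho>) \<partial>lborel) \<le> ennreal (H r)"
    and "\<And>\<rho>. \<rho> \<in> {0<..<1} \<Longrightarrow>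
      (\<integral>\<^sup>+r. indicator {0<..<1} r * indicator (I r) \<rho> * ennreal (w r * H r) \<partial>lborel) \<le> ennreal (C * \<rho> * h \<rho> / \<kappa> \<rho>)"
  shows "(\<integral>\<^sup>+r. indicator {0<..<1} r * ennreal ((cmod (set_lebesgue_integral lborel (I r)
            (\<lambda>\<rho>. complex_of_real (\<kappa> \<rho>) * u \<rho>)))\<^sup>2 * w r) \<partial>lborel)
        \<le> ennreal C * (\<integral>\<^sup>+\<rho>. indicator {0<..<1} \<rho> * ennreal (\<rho> * (cmod (u \<rho>))\<^sup>2) \<partial>lborel)"
proof -
  define v where "v x = indicator {0<..<1} x *\<^sub>R u x" for x
  have vm: "v \<in> borel_measurable borel" using um unfolding set_borel_measurable_def v_def by simp
  have e1: "(\<integral>\<^sup>+r. indicator {0<..<1} r * ennreal ((cmod (set_lebesgue_integral lborel (I r)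
            (\<lambda>\<rho>. complex_of_real (\<kappa> \<rho>) * u \<rho>)))\<^sup>2 * w r) \<partial>lborel) =
    (\<integral>\<^sup>+r. indicator {0<..<1} r * ennreal ((cmod (set_lebesgue_integral lborel (I r)
            (\<lambda>\<rho>. complex_of_real (\<kappa> \<rho>) * v \<rho>)))\<^sup>2 * w r) \<partial>lborel)"
  proof (rule nn_integral_cong)
    fix r :: real
    show "indicator {0<..<1} r * ennreal ((cmod (set_lebesgue_integral lborel (I r)
            (\<lambda>\<rho>. complex_of_real (\<kappa> \<rho>) * u \<rho>)))\<^sup>2 * w r) =
      indicator {0<..<1} r * ennreal ((cmod (set_lebesgue_integral lborel (I r)
            (\<lambda>\<rho>. complex_of_real (\<kappa> \<rho>) * v \<rho>)))\<^sup>2 * w r)"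
    proof (cases "r \<in> {0<..<1}")
      case True
      have "set_lebesgue_integral lborel (I r) (\<lambda>\<rho>. complex_of_real (\<kappa> \<rho>) * u \<rho>) =
        set_lebesgue_integral lborel (I r) (\<lambda>\<rho>. complex_of_real (\<kappa> \<rho>) * v \<rho>)"
        by (rule set_lebesgue_integral_cong) (use Is Isub[OF True] in \<open>auto simp: v_def\<close>)
      thus ?thesis by simp
    qed simp
  qed
  have e2: "(\<integral>\<^sup>+\<rho>. indicator {0<..<1} \<rho> * ennreal (\<rho> * (cmod (u \<rho>))\<^sup>2) \<partial>lborel) =
     (\<integral>\<^sup>+\<rho>. indicator {0<..<1} \<rho> * ennreal (\<rho> * (cmod (v \<rho>))\<^sup>2) \<partial>lborel)"
    by (rule nn_integral_cong) (auto simp: v_def split: split_indicator)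
  show ?thesis unfolding e1 e2
    by (rule schur[where \<kappa>=\<kappa> and h=h and w=w and H=H and I=I and C=C, OF vm]) (use assms in auto)
qed

lemma ftc_bound:
  fixes f F :: "real \<Rightarrow> real" and g :: "real \<Rightarrow> ennreal"
  assumes fm: "f \<in> borel_measurable borel" and ab: "a \<le> b"
   and d: "\<And>x. a \<le> x \<Longrightarrow> x \<le> b \<Longrightarrow> (F has_real_derivative f x) (at x)"
   and nn: "\<And>x. a \<le> x \<Longrightarrow> x \<le> b \<Longrightarrow> 0 \<le> f x"
   and g: "\<And>x. g x \<le> ennreal (f x) * indicator {a..b} x"
   and V: "F b - F a \<le> V"
  shows "(\<integral>\<^sup>+x. g x \<partial>lborel) \<le> ennreal V"
proof -
  have "(\<integral>\<^sup>+x. g x \<partial>lborel) \<le> (\<integral>\<^sup>+x. ennreal (f x) * indicator {a..b} x \<partial>lborel)"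
    by (intro nn_integral_mono g)
  also have "\<dots> = ennreal (F b - F a)"
    by (rule nn_integral_FTC_Icc[OF fm]) (use d nn ab in auto)
  also have "\<dots> \<le> ennreal V" using V by (rule ennreal_leI)
  finally show ?thesis .
qed


lemma case_neg:
  fixes m :: nat and u :: "real \<Rightarrow> complex"
  assumes um: "set_borel_measurable lborel {0<..<1} u"
  shows "(\<integral>\<^sup>+ r. indicator {0<..<1} r *
              ennreal ((cmod (set_lebesgue_integral lborel {0<..r}
                   (\<lambda>\<rho>. complex_of_real (\<rho> powr real_of_int (1 - (- int m))) * u \<rho>)))\<^sup>2
                 * r powr real_of_int (2 * (- int m) - 1)) \<partial>lborel)
           \<le> ennreal (1 / (bessel_zero m)\<^sup>2) *
             (\<integral>\<^sup>+ \<rho>. indicator {0<..<1} \<rho> * ennreal (\<rho> * (cmod (u \<rho>))\<^sup>2) \<partial>lborel)"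
proof -
  define j where "j = bessel_zero m"
  have j0: "j > 0" unfolding j_def by (rule first_zero(1))
  have Gj: "Gb m j = 0" unfolding j_def by (rule first_zero(2))
  have Gpos: "Gb m x > 0" if "0 \<le> x" "x < j" for x using that unfolding j_def by (rule first_zero(3))
  have G1pos: "Gb (Suc m) x > 0" if "0 \<le> x" "x \<le> j" for x using that unfolding j_def by (rule next_pos)
  have kap: "\<rho> powr real_of_int (1 - (- int m)) = \<rho> ^ Suc m" if "\<rho> > 0" for \<rho> :: real
  proof -
    have "real_of_int (1 - (- int m)) = real (Suc m)" by simp
    thus ?thesis using powr_realpow[OF that, of "Suc m"] by simp
  qed
  have wr: "r powr real_of_int (2 * (- int m) - 1) = 1 / r ^ (2*m+1)" if "r > 0" for r :: real
  proof -
    have e: "real_of_int (2 * (- int m) - 1) = - real (2*m+1)" by simp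
    have "r powr real_of_int (2 * (- int m) - 1) = inverse (r powr real (2*m+1))"
      unfolding e by (rule powr_minus)
    thus ?thesis using powr_realpow[OF that, of "2*m+1"] by (simp add: divide_inverse)
  qed
  show ?thesis unfolding j_def[symmetric]
  proof (rule schur2[OF um, where h="\<lambda>\<rho>. \<rho> ^ m * Gb m (j * \<rho>)"
        and H="\<lambda>r. r ^ (2*m+2) * Gb (Suc m) (j * r) / 2" and I="\<lambda>r. {0<..r}"])
    show "(\<lambda>p::real\<times>real. indicator {0<..snd p} (fst p) :: ennreal) \<in> borel_measurable (lborel \<Otimes>\<^sub>M lborel)"
      by (rule Im1)
  next
    fix r :: real assume r: "r \<in> {0<..<1}"
    have jr: "j * r < j" using r j0 by simp
    show "0 \<le> r ^ (2*m+2) * Gb (Suc m) (j * r) / 2"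
      using G1pos[of "j*r"] r j0 jr by (intro divide_nonneg_pos mult_nonneg_nonneg) auto
    show "0 \<le> r powr real_of_int (2 * - int m - 1)" by simp
    show "(\<integral>\<^sup>+\<rho>. indicator {0<..r} \<rho> * ennreal (\<rho> powr real_of_int (1 - - int m) * (\<rho> ^ m * Gb m (j * \<rho>))) \<partial>lborel)
       \<le> ennreal (r ^ (2*m+2) * Gb (Suc m) (j * r) / 2)"
    proof (rule ftc_bound[where f="\<lambda>x. x ^ (2*m+1) * Gb m (j * x)" and F="\<lambda>x. x ^ (2*m+2) * Gb (Suc m) (j * x) / 2" and a=0 and b=r])
      show "(\<lambda>x. x ^ (2*m+1) * Gb m (j * x)) \<in> borel_measurable borel" by measurable
      show "0 \<le> r" using r by simp
    next
      fix x :: real assume x: "0 \<le> x" "x \<le> r"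
      show "((\<lambda>x. x ^ (2*m+2) * Gb (Suc m) (j * x) / 2) has_real_derivative x ^ (2*m+1) * Gb m (j * x)) (at x)"
        using DERIV_cdivide[OF S_deriv[of m j x UNIV], of 2] by (simp add: mult.assoc)
      have "j * x < j" using x r j0 by (simp add: mult_less_cancel_left1 less_le_trans[of x r 1])
      thus "0 \<le> x ^ (2*m+1) * Gb m (j * x)"
        using Gpos[of "j*x"] x j0 by (intro mult_nonneg_nonneg) auto
    next
      fix x :: real
      show "indicator {0<..r} x * ennreal (x powr real_of_int (1 - - int m) * (x ^ m * Gb m (j * x)))
        \<le> ennreal (x ^ (2*m+1) * Gb m (j * x)) * indicator {0..r} x"
      proof (cases "x \<in> {0<..r}")
        case True
        hence eq: "x powr real_of_int (1 - - int m) * (x ^ m * Gb m (j * x)) = x ^ (2*m+1) * Gb m (j * x)"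
        proof -
          have p: "x ^ (2*m+1) = x ^ Suc m * x ^ m" unfolding power_add[symmetric] by (simp add: mult_2)
          show ?thesis using kap[of x] True unfolding p by simp
        qed
        have i: "indicator {0<..r} x = (1::ennreal)" "indicator {0..r} x = (1::ennreal)" using True by auto
        show ?thesis by (simp only: i eq mult_1_left mult_1_right order_refl)
      qed simp
    next
      show "r ^ (2*m+2) * Gb (Suc m) (j * r) / 2 - 0 ^ (2*m+2) * Gb (Suc m) (j * 0) / 2
        \<le> r ^ (2*m+2) * Gb (Suc m) (j * r) / 2" by simp
    qed
  next
    show "0 \<le> 1 / j\<^sup>2" by simp
  next
    fix \<rho> :: real assume p: "\<rho> \<in> {0<..<1}"
    show "0 < \<rho> powr real_of_int (1 - - int m)" using p by simp
    have "j * \<rho> < j" using p j0 by simp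
    thus "0 < \<rho> ^ m * Gb m (j * \<rho>)" using Gpos[of "j*\<rho>"] p j0 by simp
  next
    fix \<rho> :: real assume p: "\<rho> \<in> {0<..<1}"
    show "(\<integral>\<^sup>+r. indicator {0<..<1} r * indicator {0<..r} \<rho> *
        ennreal (r powr real_of_int (2 * - int m - 1) * (r ^ (2*m+2) * Gb (Suc m) (j * r) / 2)) \<partial>lborel)
      \<le> ennreal (1 / j\<^sup>2 * \<rho> * (\<rho> ^ m * Gb m (j * \<rho>)) / \<rho> powr real_of_int (1 - - int m))"
    proof (rule ftc_bound[where f="\<lambda>x. x * Gb (Suc m) (j * x) / 2" and F="\<lambda>x. - Gb m (j * x) / j\<^sup>2" and a=\<rho> and b=1])
      show "(\<lambda>x. x * Gb (Suc m) (j * x) / 2) \<in> borel_measurable borel" by measurable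
      show "\<rho> \<le> 1" using p by simp
    next
      fix x :: real assume x: "\<rho> \<le> x" "x \<le> 1"
      have "((\<lambda>x. Gb m (j * x)) has_real_derivative (- (j * x / 2) * Gb (Suc m) (j * x) * j)) (at x)"
        by (rule Gb_deriv) (auto intro!: derivative_eq_intros)
      from DERIV_cdivide[OF DERIV_minus[OF this], of "j\<^sup>2"]
      show "((\<lambda>x. - Gb m (j * x) / j\<^sup>2) has_real_derivative x * Gb (Suc m) (j * x) / 2) (at x)"
        using j0 by (simp add: power2_eq_square field_simps)
      have "j * x \<le> j" using x j0 by simp
      thus "0 \<le> x * Gb (Suc m) (j * x) / 2" using G1pos[of "j*x"] x p j0 by simp
    next
      fix r :: real
      show "indicator {0<..<1} r * indicator {0<..r} \<rho> *
        ennreal (r powr real_of_int (2 * - int m - 1) * (r ^ (2*m+2) * Gb (Suc m) (j * r) / 2))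
        \<le> ennreal (r * Gb (Suc m) (j * r) / 2) * indicator {\<rho>..1} r"
      proof (cases "r \<in> {0<..<1} \<and> \<rho> \<in> {0<..r}")
        case True
        hence r0: "r > 0" by simp
        have eq: "r powr real_of_int (2 * - int m - 1) * (r ^ (2*m+2) * Gb (Suc m) (j * r) / 2) = r * Gb (Suc m) (j * r) / 2"
          using wr[OF r0] r0 by (simp add: field_simps)
        have i: "indicator {0<..<1} r = (1::ennreal)" "indicator {0<..r} \<rho> = (1::ennreal)" "indicator {\<rho>..1} r = (1::ennreal)"
          using True by auto
        show ?thesis by (simp only: i eq mult_1_left mult_1_right order_refl)
      qed (auto split: split_indicator)
    next
      have "- Gb m (j * 1) / j\<^sup>2 - - Gb m (j * \<rho>) / j\<^sup>2 = Gb m (j * \<rho>) / j\<^sup>2" using Gj by simp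
      also have "\<dots> = 1 / j\<^sup>2 * \<rho> * (\<rho> ^ m * Gb m (j * \<rho>)) / \<rho> powr real_of_int (1 - - int m)"
        using kap[of \<rho>] p by (simp add: field_simps)
      finally show "- Gb m (j * 1) / j\<^sup>2 - - Gb m (j * \<rho>) / j\<^sup>2
          \<le> 1 / j\<^sup>2 * \<rho> * (\<rho> ^ m * Gb m (j * \<rho>)) / \<rho> powr real_of_int (1 - - int m)" by simp
    qed
  qed (auto)
qed


lemma case_pos:
  fixes k :: nat and u :: "real \<Rightarrow> complex"
  assumes um: "set_borel_measurable lborel {0<..<1} u"
  shows "(\<integral>\<^sup>+ r. indicator {0<..<1} r *
              ennreal ((cmod (set_lebesgue_integral lborel {r..<1}
                   (\<lambda>\<rho>. complex_of_real (\<rho> powr real_of_int (1 - (int k + 1))) * u \<rho>)))\<^sup>2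
                 * r powr real_of_int (2 * (int k + 1) - 1)) \<partial>lborel)
           \<le> ennreal (1 / (bessel_zero k)\<^sup>2) *
             (\<integral>\<^sup>+ \<rho>. indicator {0<..<1} \<rho> * ennreal (\<rho> * (cmod (u \<rho>))\<^sup>2) \<partial>lborel)"
proof -
  define j where "j = bessel_zero k"
  have j0: "j > 0" unfolding j_def by (rule first_zero(1))
  have Gj: "Gb k j = 0" unfolding j_def by (rule first_zero(2))
  have Gpos: "Gb k x > 0" if "0 \<le> x" "x < j" for x using that unfolding j_def by (rule first_zero(3))
  have G1pos: "Gb (Suc k) x > 0" if "0 \<le> x" "x \<le> j" for x using that unfolding j_def by (rule next_pos)
  have kap: "\<rho> powr real_of_int (1 - (int k + 1)) = 1 / \<rho> ^ k" if "\<rho> > 0" for \<rho> :: real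
  proof -
    have e: "real_of_int (1 - (int k + 1)) = - real k" by simp
    have "\<rho> powr real_of_int (1 - (int k + 1)) = inverse (\<rho> powr real k)"
      unfolding e by (rule powr_minus)
    thus ?thesis using powr_realpow[OF that, of k] by (simp add: divide_inverse)
  qed
  have wr: "r powr real_of_int (2 * (int k + 1) - 1) = r ^ (2*k+1)" if "r > 0" for r :: real
  proof -
    have "real_of_int (2 * (int k + 1) - 1) = real (2*k+1)" by simp
    thus ?thesis using powr_realpow[OF that, of "2*k+1"] by simp
  qed
  show ?thesis unfolding j_def[symmetric]
  proof (rule schur2[OF um, where h="\<lambda>\<rho>. \<rho> ^ Suc k * Gb (Suc k) (j * \<rho>)"
        and H="\<lambda>r. 2 * Gb k (j * r) / j\<^sup>2" and I="\<lambda>r. {r..<1}"])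
    show "(\<lambda>p::real\<times>real. indicator {snd p..<1} (fst p) :: ennreal) \<in> borel_measurable (lborel \<Otimes>\<^sub>M lborel)"
      by (rule Im2)
  next
    fix r :: real assume r: "r \<in> {0<..<1}"
    have jr: "j * r < j" using r j0 by simp
    show "0 \<le> 2 * Gb k (j * r) / j\<^sup>2"
      using Gpos[of "j*r"] r j0 jr by simp
    show "0 \<le> r powr real_of_int (2 * (int k + 1) - 1)" by simp
    show "(\<integral>\<^sup>+\<rho>. indicator {r..<1} \<rho> * ennreal (\<rho> powr real_of_int (1 - (int k + 1)) * (\<rho> ^ Suc k * Gb (Suc k) (j * \<rho>))) \<partial>lborel)
       \<le> ennreal (2 * Gb k (j * r) / j\<^sup>2)"
    proof (rule ftc_bound[where f="\<lambda>x. x * Gb (Suc k) (j * x)" and F="\<lambda>x. - 2 * Gb k (j * x) / j\<^sup>2" and a=r and b=1])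
      show "(\<lambda>x. x * Gb (Suc k) (j * x)) \<in> borel_measurable borel" by measurable
      show "r \<le> 1" using r by simp
    next
      fix x :: real assume x: "r \<le> x" "x \<le> 1"
      have "((\<lambda>x. Gb k (j * x)) has_real_derivative (- (j * x / 2) * Gb (Suc k) (j * x) * j)) (at x)"
        by (rule Gb_deriv) (auto intro!: derivative_eq_intros)
      from DERIV_cdivide[OF DERIV_cmult[OF this, of "-2"], of "j\<^sup>2"]
      show "((\<lambda>x. - 2 * Gb k (j * x) / j\<^sup>2) has_real_derivative x * Gb (Suc k) (j * x)) (at x)"
        using j0 by (simp add: power2_eq_square field_simps)
      have "j * x \<le> j" using x j0 by simp
      thus "0 \<le> x * Gb (Suc k) (j * x)" using G1pos[of "j*x"] x r j0 by simp
    next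
      fix x :: real
      show "indicator {r..<1} x * ennreal (x powr real_of_int (1 - (int k + 1)) * (x ^ Suc k * Gb (Suc k) (j * x)))
        \<le> ennreal (x * Gb (Suc k) (j * x)) * indicator {r..1} x"
      proof (cases "x \<in> {r..<1}")
        case True
        hence x0: "x > 0" using r by auto
        have eq: "x powr real_of_int (1 - (int k + 1)) * (x ^ Suc k * Gb (Suc k) (j * x)) = x * Gb (Suc k) (j * x)"
          using kap[OF x0] x0 by simp
        have i: "indicator {r..<1} x = (1::ennreal)" "indicator {r..1} x = (1::ennreal)" using True by auto
        show ?thesis by (simp only: i eq mult_1_left mult_1_right order_refl)
      qed simp
    next
      show "- 2 * Gb k (j * 1) / j\<^sup>2 - - 2 * Gb k (j * r) / j\<^sup>2 \<le> 2 * Gb k (j * r) / j\<^sup>2"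
        using Gj by simp
    qed
  next
    show "0 \<le> 1 / j\<^sup>2" by simp
  next
    fix \<rho> :: real assume p: "\<rho> \<in> {0<..<1}"
    show "0 < \<rho> powr real_of_int (1 - (int k + 1))" using p by simp
    have "j * \<rho> \<le> j" using p j0 by simp
    thus "0 < \<rho> ^ Suc k * Gb (Suc k) (j * \<rho>)" using G1pos[of "j*\<rho>"] p j0 by simp
  next
    fix \<rho> :: real assume p: "\<rho> \<in> {0<..<1}"
    show "(\<integral>\<^sup>+r. indicator {0<..<1} r * indicator {r..<1} \<rho> *
        ennreal (r powr real_of_int (2 * (int k + 1) - 1) * (2 * Gb k (j * r) / j\<^sup>2)) \<partial>lborel)
      \<le> ennreal (1 / j\<^sup>2 * \<rho> * (\<rho> ^ Suc k * Gb (Suc k) (j * \<rho>)) / \<rho> powr real_of_int (1 - (int k + 1)))"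
    proof (rule ftc_bound[where f="\<lambda>x. 2 * x ^ (2*k+1) * Gb k (j * x) / j\<^sup>2" and F="\<lambda>x. x ^ (2*k+2) * Gb (Suc k) (j * x) / j\<^sup>2" and a=0 and b=\<rho>])
      show "(\<lambda>x. 2 * x ^ (2*k+1) * Gb k (j * x) / j\<^sup>2) \<in> borel_measurable borel" by measurable
      show "0 \<le> \<rho>" using p by simp
    next
      fix x :: real assume x: "0 \<le> x" "x \<le> \<rho>"
      show "((\<lambda>x. x ^ (2*k+2) * Gb (Suc k) (j * x) / j\<^sup>2) has_real_derivative 2 * x ^ (2*k+1) * Gb k (j * x) / j\<^sup>2) (at x)"
        by (rule DERIV_cdivide[OF S_deriv[of k j x UNIV]])
      have "j * x < j" using x p j0 by simp
      thus "0 \<le> 2 * x ^ (2*k+1) * Gb k (j * x) / j\<^sup>2" using Gpos[of "j*x"] x j0 by simp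
    next
      fix r :: real
      show "indicator {0<..<1} r * indicator {r..<1} \<rho> *
        ennreal (r powr real_of_int (2 * (int k + 1) - 1) * (2 * Gb k (j * r) / j\<^sup>2))
        \<le> ennreal (2 * r ^ (2*k+1) * Gb k (j * r) / j\<^sup>2) * indicator {0..\<rho>} r"
      proof (cases "r \<in> {0<..<1} \<and> \<rho> \<in> {r..<1}")
        case True
        hence r0: "r > 0" by simp
        have eq: "r powr real_of_int (2 * (int k + 1) - 1) * (2 * Gb k (j * r) / j\<^sup>2) = 2 * r ^ (2*k+1) * Gb k (j * r) / j\<^sup>2"
          using wr[OF r0] by simp
        have i: "indicator {0<..<1} r = (1::ennreal)" "indicator {r..<1} \<rho> = (1::ennreal)" "indicator {0..\<rho>} r = (1::ennreal)"
          using True by auto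
        show ?thesis by (simp only: i eq mult_1_left mult_1_right order_refl)
      qed (auto split: split_indicator)
    next
      have "\<rho> ^ (2*k+2) * Gb (Suc k) (j * \<rho>) / j\<^sup>2 - 0 ^ (2*k+2) * Gb (Suc k) (j * 0) / j\<^sup>2
          = \<rho> ^ (2*k+2) * Gb (Suc k) (j * \<rho>) / j\<^sup>2" by simp
      also have "\<dots> = 1 / j\<^sup>2 * \<rho> * (\<rho> ^ Suc k * Gb (Suc k) (j * \<rho>)) / \<rho> powr real_of_int (1 - (int k + 1))"
      proof -
        have p0: "\<rho> > 0" using p by simp
        have e: "\<rho> ^ (2*k+2) = \<rho> * \<rho> ^ Suc k * \<rho> ^ k" unfolding power_add[symmetric] mult.assoc[symmetric] power_Suc[symmetric]
          by (simp add: mult_2 power_add[symmetric])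
        show ?thesis unfolding kap[OF p0] e using p0 by (simp add: field_simps)
      qed
      finally show "\<rho> ^ (2*k+2) * Gb (Suc k) (j * \<rho>) / j\<^sup>2 - 0 ^ (2*k+2) * Gb (Suc k) (j * 0) / j\<^sup>2
          \<le> 1 / j\<^sup>2 * \<rho> * (\<rho> ^ Suc k * Gb (Suc k) (j * \<rho>)) / \<rho> powr real_of_int (1 - (int k + 1))" by simp
    qed
  qed (auto)
qed

theorem lemma2p5:
  fixes d :: int and u :: "real \<Rightarrow> complex"
  assumes meas: "set_borel_measurable lborel {0<..<1} u"
    and fin: "(\<integral>\<^sup>+ \<rho>. indicator {0<..<1} \<rho> * ennreal (\<rho> * (cmod (u \<rho>))\<^sup>2) \<partial>lborel) < \<infinity>"
  shows "(d \<le> 0 \<longrightarrow>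
           (\<integral>\<^sup>+ r. indicator {0<..<1} r *
              ennreal ((cmod (set_lebesgue_integral lborel {0<..r}
                   (\<lambda>\<rho>. complex_of_real (\<rho> powr real_of_int (1 - d)) * u \<rho>)))\<^sup>2
                 * r powr real_of_int (2 * d - 1)) \<partial>lborel)
           \<le> ennreal (1 / (bessel_zero (nat (- d)))\<^sup>2) *
             (\<integral>\<^sup>+ \<rho>. indicator {0<..<1} \<rho> * ennreal (\<rho> * (cmod (u \<rho>))\<^sup>2) \<partial>lborel))
       \<and> (d \<ge> 1 \<longrightarrow>
           (\<integral>\<^sup>+ r. indicator {0<..<1} r *
              ennreal ((cmod (set_lebesgue_integral lborel {r..<1}
                   (\<lambda>\<rho>. complex_of_real (\<rho> powr real_of_int (1 - d)) * u \<rho>)))\<^sup>2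
                 * r powr real_of_int (2 * d - 1)) \<partial>lborel)
           \<le> ennreal (1 / (bessel_zero (nat (d - 1)))\<^sup>2) *
             (\<integral>\<^sup>+ \<rho>. indicator {0<..<1} \<rho> * ennreal (\<rho> * (cmod (u \<rho>))\<^sup>2) \<partial>lborel))"
proof (intro conjI impI)
  assume "d \<le> 0"
  define m where "m = nat (- d)"
  have d: "d = - int m" using \<open>d \<le> 0\<close> unfolding m_def by simp
  show "(\<integral>\<^sup>+ r. indicator {0<..<1} r *
              ennreal ((cmod (set_lebesgue_integral lborel {0<..r}
                   (\<lambda>\<rho>. complex_of_real (\<rho> powr real_of_int (1 - d)) * u \<rho>)))\<^sup>2
                 * r powr real_of_int (2 * d - 1)) \<partial>lborel)
           \<le> ennreal (1 / (bessel_zero (nat (- d)))\<^sup>2) *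
             (\<integral>\<^sup>+ \<rho>. indicator {0<..<1} \<rho> * ennreal (\<rho> * (cmod (u \<rho>))\<^sup>2) \<partial>lborel)"
    using case_neg[OF meas, of m] unfolding d by simp
next
  assume "d \<ge> 1"
  define k where "k = nat (d - 1)"
  have d: "d = int k + 1" using \<open>d \<ge> 1\<close> unfolding k_def by simp
  show "(\<integral>\<^sup>+ r. indicator {0<..<1} r *
              ennreal ((cmod (set_lebesgue_integral lborel {r..<1}
                   (\<lambda>\<rho>. complex_of_real (\<rho> powr real_of_int (1 - d)) * u \<rho>)))\<^sup>2
                 * r powr real_of_int (2 * d - 1)) \<partial>lborel)
           \<le> ennreal (1 / (bessel_zero (nat (d - 1)))\<^sup>2) *
             (\<integral>\<^sup>+ \<rho>. indicator {0<..<1} \<rho> * ennreal (\<rho> * (cmod (u \<rho>))\<^sup>2) \<partial>lborel)"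
    using case_pos[OF meas, of k] unfolding d by simp
qed

end
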